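(* Assume $\gamma$ is radial and satisfies, near $r=\sqrt{x^2+y^2}=0$, $\gamma(r)=h+\frac{r^2}{2R_1}+\frac{r^4}{8R_3^3}+O(r^6)$. Let $f_0\in\mathbb R$ and let $\varpi_0$ be the unique solution of $-\frac1{12}\mathrm{div}(\gamma^3\nabla\varpi_0)=f_0$ in $B(\mathbf 0,L)$, $\varpi_0=0$ on $\partial B(\mathbf 0,L)$. Then $$\int_{B(\mathbf 0,L)}\gamma^3|\nabla\varpi_0|^2=72\pi|f_0|^2\Big[\frac{R_1^2}{h}-\frac{3R_1^4}{R_3^3}|\ln h|\Big]+O(1),$$ where $O(1)$ denotes a quantity bounded, for all $h\in(0,1]$, by a constant independent of $h$.
   Context: $R,S>0$ are the radii of two spheres, $0<L<\min(R,S)$, and $R_1,R_3>0$ are defined by $\frac1{R_1}=\frac1S+\frac1R$, $\frac1{R_3^3}=\frac1{S^3}+\frac1{R^3}$. On $B(\mathbf 0,L)\subset\mathbb R^2$, $\gamma_t(x,y)=S-\sqrt{S^2-x^2-y^2}$, $\gamma_b(x,y)=-R+\sqrt{R^2-x^2-y^2}$ and, for $h>0$, $\gamma=h+\gamma_t-\gamma_b$. *)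

theory Defs
  imports "HOL-Analysis.Analysis"
begin

text \<open>Points of R^2 are pairs (x,y) :: real \<times> real; the product norm is sqrt(x^2+y^2).\<close>

definition gamma_t :: "real \<Rightarrow> real \<times> real \<Rightarrow> real" where
  "gamma_t S p = S - sqrt (S\<^sup>2 - (fst p)\<^sup>2 - (snd p)\<^sup>2)"

definition gamma_b :: "real \<Rightarrow> real \<times> real \<Rightarrow> real" where
  "gamma_b R p = - R + sqrt (R\<^sup>2 - (fst p)\<^sup>2 - (snd p)\<^sup>2)"

definition gap :: "real \<Rightarrow> real \<Rightarrow> real \<Rightarrow> real \<times> real \<Rightarrow> real" where
  "gap R S h p = h + gamma_t S p - gamma_b R p"

text \<open>G is the gradient of w on the open ball; the flux gap^3 G is
  differentiable with derivative F' p, whose trace is the divergence.\<close>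

definition solves_reynolds ::
  "real \<Rightarrow> real \<Rightarrow> real \<Rightarrow> real \<Rightarrow> real \<Rightarrow>
   (real \<times> real \<Rightarrow> real) \<Rightarrow> (real \<times> real \<Rightarrow> real \<times> real) \<Rightarrow> bool" where
  "solves_reynolds R S h L f0 w G \<longleftrightarrow>
     continuous_on (cball 0 L) w \<and>
     (\<forall>p\<in>sphere 0 L. w p = 0) \<and>
     (\<forall>p\<in>ball 0 L. (w has_derivative (\<lambda>v. G p \<bullet> v)) (at p)) \<and>
     (\<exists>F'. \<forall>p\<in>ball 0 L.
        ((\<lambda>q. (gap R S h q)^3 *\<^sub>R G q) has_derivative F' p) (at p) \<and>
        - (1/12) * (fst (F' p (1,0)) + snd (F' p (0,1))) = f0)"

end

theory Submission
  imports Defs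
begin


lemma poly_e1: "(S::real) > 0 \<Longrightarrow> S - s - (S\<^sup>2 - s\<^sup>2)/(2*S) = (S - s)\<^sup>2/(2*S)"
  apply (simp add: field_simps)
  apply algebra
  done

lemma poly_e2: "(S::real) > 0 \<Longrightarrow> S - s - (S\<^sup>2 - s\<^sup>2)/(2*S) - (S\<^sup>2 - s\<^sup>2)\<^sup>2/(8*S^3) = (S-s)^3*(s+3*S)/(8*S^3)"
  apply (simp add: field_simps)
  apply algebra
  done

lemma sph_taylor:
  fixes S \<rho> :: real
  assumes S: "S > 0" and r0: "0 \<le> \<rho>" and r1: "\<rho> \<le> S\<^sup>2"
  shows "\<rho>/(2*S) \<le> S - sqrt (S\<^sup>2 - \<rho>)"
    and "S - sqrt (S\<^sup>2 - \<rho>) \<le> \<rho>/(2*S) + \<rho>\<^sup>2/(2*S^3)"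
    and "0 \<le> S - sqrt (S\<^sup>2 - \<rho>) - \<rho>/(2*S) - \<rho>\<^sup>2/(8*S^3)"
    and "S - sqrt (S\<^sup>2 - \<rho>) - \<rho>/(2*S) - \<rho>\<^sup>2/(8*S^3) \<le> \<rho>^3/(2*S^5)"
proof -
  define s where "s = sqrt (S\<^sup>2 - \<rho>)"
  have s0: "s \<ge> 0" unfolding s_def using r1 by simp
  have ss: "s\<^sup>2 = S\<^sup>2 - \<rho>" unfolding s_def using r1 by simp
  have "s\<^sup>2 \<le> S\<^sup>2" using ss r0 by simp
  hence sS: "s \<le> S" using S power2_le_imp_le by fastforce
  have rho: "\<rho> = S\<^sup>2 - s\<^sup>2" using ss by simp
  have d: "S - s \<le> \<rho> / S"
  proof -
    have "(S - s) * S \<le> (S - s) * (S + s)" using s0 sS by (intro mult_left_mono) auto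
    also have "\<dots> = \<rho>" using rho by (simp add: power2_eq_square algebra_simps)
    finally show ?thesis using S by (simp add: field_simps)
  qed
  have e1: "S - s - \<rho>/(2*S) = (S - s)\<^sup>2/(2*S)" using poly_e1[OF S, of s] rho by simp
  have e2: "S - s - \<rho>/(2*S) - \<rho>\<^sup>2/(8*S^3) = (S-s)^3*(s+3*S)/(8*S^3)" using poly_e2[OF S, of s] rho by simp
  have sq: "(S - s)\<^sup>2 \<le> (\<rho>/S)\<^sup>2" using d sS by (intro power_mono) auto
  have cb: "(S - s)^3 \<le> (\<rho>/S)^3" using d sS by (intro power_mono) auto
  show "\<rho>/(2*S) \<le> S - sqrt (S\<^sup>2 - \<rho>)" using e1 S unfolding s_def[symmetric]
    by (smt (verit) divide_nonneg_pos zero_le_power2)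
  show "S - sqrt (S\<^sup>2 - \<rho>) \<le> \<rho>/(2*S) + \<rho>\<^sup>2/(2*S^3)"
  proof -
    have "(S - s)\<^sup>2/(2*S) \<le> (\<rho>/S)\<^sup>2/(2*S)" using sq S by (simp add: divide_right_mono)
    also have "\<dots> = \<rho>\<^sup>2/(2*S^3)" using S by (simp add: field_simps power2_eq_square power3_eq_cube)
    finally show ?thesis using e1 unfolding s_def[symmetric] by linarith
  qed
  show "0 \<le> S - sqrt (S\<^sup>2 - \<rho>) - \<rho>/(2*S) - \<rho>\<^sup>2/(8*S^3)"
    unfolding s_def[symmetric] e2 using sS s0 S by simp
  show "S - sqrt (S\<^sup>2 - \<rho>) - \<rho>/(2*S) - \<rho>\<^sup>2/(8*S^3) \<le> \<rho>^3/(2*S^5)"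
  proof -
    have "(S-s)^3*(s+3*S) \<le> (\<rho>/S)^3 * (4*S)"
      using cb sS s0 S r0 by (intro mult_mono) auto
    hence "(S-s)^3*(s+3*S)/(8*S^3) \<le> (\<rho>/S)^3 * (4*S)/(8*S^3)" by (rule divide_right_mono) (use S in simp)
    also have "\<dots> = \<rho>^3/(2*S^5)" using S by (simp add: field_simps power2_eq_square power3_eq_cube eval_nat_numeral)
    finally show ?thesis unfolding s_def[symmetric] e2 .
  qed
qed


lemma T_ident: "(x::real) > 0 \<Longrightarrow> d \<ge> 0 \<Longrightarrow>
  1/(x+d)^3 - 1/x^3 + 3*d/x^4 = (6*x\<^sup>2*d\<^sup>2 + 8*x*d^3 + 3*d^4)/(x^4*(x+d)^3)"
  apply (simp add: field_simps)
  apply algebra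
  done

lemma T_bound:
  fixes x d :: real assumes x: "x > 0" and d: "d \<ge> 0"
  shows "0 \<le> 1/(x+d)^3 - 1/x^3 + 3*d/x^4" and "1/(x+d)^3 - 1/x^3 + 3*d/x^4 \<le> 6*d\<^sup>2/x^5"
proof -
  have xd: "x + d > 0" using x d by simp
  show "0 \<le> 1/(x+d)^3 - 1/x^3 + 3*d/x^4" unfolding T_ident[OF x d] using x d xd by simp
  have num: "(6*x\<^sup>2*d\<^sup>2 + 8*x*d^3 + 3*d^4) * x \<le> 6*d\<^sup>2 * (x+d)^3"
  proof -
    have "6*d\<^sup>2 * (x+d)^3 - (6*x\<^sup>2*d\<^sup>2 + 8*x*d^3 + 3*d^4) * x = 10*x\<^sup>2*d^3 + 15*x*d^4 + 6*d^5"
      by algebra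
    also have "\<dots> \<ge> 0" using x d by simp
    finally show ?thesis by simp
  qed
  have "(6*x\<^sup>2*d\<^sup>2 + 8*x*d^3 + 3*d^4)/(x^4*(x+d)^3) = ((6*x\<^sup>2*d\<^sup>2 + 8*x*d^3 + 3*d^4) * x) / (x^5*(x+d)^3)"
    using x xd by (simp add: field_simps) algebra
  also have "\<dots> \<le> (6*d\<^sup>2 * (x+d)^3) / (x^5*(x+d)^3)"
    using num x xd by (intro divide_right_mono) auto
  also have "\<dots> = 6*d\<^sup>2/x^5" using xd by simp
  finally show "1/(x+d)^3 - 1/x^3 + 3*d/x^4 \<le> 6*d\<^sup>2/x^5" unfolding T_ident[OF x d] .
qed

lemma rem_bound:
  fixes x d \<rho> a b c1 c2 :: real
  assumes x: "x > 0" and a: "a > 0" and r: "\<rho> \<ge> 0" and ax: "a*\<rho> \<le> x" and d0: "0 \<le> d"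
    and d1: "d \<le> c1*\<rho>\<^sup>2" and d2: "\<bar>d - b*\<rho>\<^sup>2\<bar> \<le> c2*\<rho>^3"
    and c1: "c1 \<ge> 0" and c2: "c2 \<ge> 0"
  shows "\<bar>\<rho>/(x+d)^3 - \<rho>/x^3 + 3*b*\<rho>^3/x^4\<bar> \<le> 6*c1\<^sup>2/a^5 + 3*c2/a^4"
proof -
  define T where "T = 1/(x+d)^3 - 1/x^3 + 3*d/x^4"
  have T0: "0 \<le> T" and T1: "T \<le> 6*d\<^sup>2/x^5" using T_bound[OF x d0] unfolding T_def by auto
  have split: "\<rho>/(x+d)^3 - \<rho>/x^3 + 3*b*\<rho>^3/x^4 = \<rho>*T + 3*\<rho>*(b*\<rho>\<^sup>2 - d)/x^4"
    unfolding T_def using x by (simp add: field_simps power2_eq_square power3_eq_cube)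
  have p5: "\<rho>^5/x^5 \<le> 1/a^5"
  proof -
    have "(a*\<rho>)^5 \<le> x^5" using ax a r by (intro power_mono) auto
    hence "a^5*\<rho>^5 \<le> x^5" by (simp add: power_mult_distrib)
    thus ?thesis using a x by (simp add: field_simps)
  qed
  have p4: "\<rho>^4/x^4 \<le> 1/a^4"
  proof -
    have "(a*\<rho>)^4 \<le> x^4" using ax a r by (intro power_mono) auto
    hence "a^4*\<rho>^4 \<le> x^4" by (simp add: power_mult_distrib)
    thus ?thesis using a x by (simp add: field_simps)
  qed
  have "\<bar>\<rho>*T\<bar> = \<rho>*T" using T0 r by simp
  also have "\<rho>*T \<le> \<rho>*(6*d\<^sup>2/x^5)" by (rule mult_left_mono[OF T1 r])
  also have "\<dots> \<le> \<rho>*(6*(c1*\<rho>\<^sup>2)\<^sup>2/x^5)"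
    using d0 d1 r x by (intro mult_left_mono divide_right_mono) (auto intro!: power_mono)
  also have "\<dots> = 6*c1\<^sup>2*(\<rho>^5/x^5)" by (simp add: power2_eq_square field_simps eval_nat_numeral)
  also have "\<dots> \<le> 6*c1\<^sup>2*(1/a^5)" using p5 c1 by (intro mult_left_mono) auto
  finally have A: "\<bar>\<rho>*T\<bar> \<le> 6*c1\<^sup>2/a^5" by simp
  have "\<bar>3*\<rho>*(b*\<rho>\<^sup>2 - d)/x^4\<bar> = 3*\<rho>*\<bar>d - b*\<rho>\<^sup>2\<bar>/x^4" using r x by (simp add: abs_mult abs_minus_commute)
  also have "\<dots> \<le> 3*\<rho>*(c2*\<rho>^3)/x^4" using d2 r x by (intro divide_right_mono mult_left_mono) auto
  also have "\<dots> = 3*c2*(\<rho>^4/x^4)" by (simp add: field_simps power3_eq_cube power4_eq_xxxx)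
  also have "\<dots> \<le> 3*c2*(1/a^4)"
    using p4 c2 by (intro mult_left_mono) auto
  finally have B: "\<bar>3*\<rho>*(b*\<rho>\<^sup>2 - d)/x^4\<bar> \<le> 3*c2/a^4" by simp
  show ?thesis unfolding split using A B abs_triangle_ineq[of "\<rho>*T" "3*\<rho>*(b*\<rho>\<^sup>2 - d)/x^4"] by linarith
qed


definition P1 :: "real \<Rightarrow> real \<Rightarrow> real \<Rightarrow> real" where
  "P1 a h \<rho> = (1/a\<^sup>2) * (- 1/(h+a*\<rho>) + h/(2*(h+a*\<rho>)\<^sup>2))"
definition P2 :: "real \<Rightarrow> real \<Rightarrow> real \<Rightarrow> real" where
  "P2 a h \<rho> = (1/a^4) * (ln (h+a*\<rho>) + 3*h/(h+a*\<rho>) - 3*h\<^sup>2/(2*(h+a*\<rho>)\<^sup>2) + h^3/(3*(h+a*\<rho>)^3))"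

lemma P1_deriv:
  assumes a: "a > 0" and h: "h > 0" and x: "x \<ge> 0"
  shows "(P1 a h has_real_derivative x/(h+a*x)^3) (at x)"
proof -
  define Y where "Y = h + a*x"
  have Y: "Y > 0" using a h x unfolding Y_def by (simp add: add_pos_nonneg)
  have dQ: "((\<lambda>Y. (1/a\<^sup>2) * (- 1/Y + h/(2*Y\<^sup>2))) has_real_derivative (1/a\<^sup>2)*(1/Y\<^sup>2 - h/Y^3)) (at Y)"
    using Y a by (auto intro!: derivative_eq_intros simp: field_simps power2_eq_square power3_eq_cube)
  have dL: "((\<lambda>\<rho>. h + a*\<rho>) has_real_derivative a) (at x)" by (auto intro!: derivative_eq_intros)
  have "((\<lambda>\<rho>. (1/a\<^sup>2) * (- 1/(h+a*\<rho>) + h/(2*(h+a*\<rho>)\<^sup>2))) has_real_derivative (1/a\<^sup>2)*(1/Y\<^sup>2 - h/Y^3) * a) (at x)"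
    using DERIV_chain2[OF dQ[unfolded Y_def] dL] unfolding Y_def .
  moreover have "(1/a\<^sup>2)*(1/Y\<^sup>2 - h/Y^3) * a = x/Y^3"
  proof -
    have hx: "h = Y - a*x" unfolding Y_def by simp
    show ?thesis unfolding hx using Y a by (simp add: field_simps power2_eq_square power3_eq_cube)
  qed
  ultimately show ?thesis unfolding P1_def Y_def by simp
qed

lemma P2_deriv:
  assumes a: "a > 0" and h: "h > 0" and x: "x \<ge> 0"
  shows "(P2 a h has_real_derivative x^3/(h+a*x)^4) (at x)"
proof -
  define Y where "Y = h + a*x"
  have Y: "Y > 0" using a h x unfolding Y_def by (simp add: add_pos_nonneg)
  have dQ: "((\<lambda>Y. (1/a^4) * (ln Y + 3*h/Y - 3*h\<^sup>2/(2*Y\<^sup>2) + h^3/(3*Y^3))) has_real_derivative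
      (1/a^4)*(1/Y - 3*h/Y\<^sup>2 + 3*h\<^sup>2/Y^3 - h^3/Y^4)) (at Y)"
    using Y a by (auto intro!: derivative_eq_intros simp: field_simps power2_eq_square power3_eq_cube power4_eq_xxxx)
  have dL: "((\<lambda>\<rho>. h + a*\<rho>) has_real_derivative a) (at x)" by (auto intro!: derivative_eq_intros)
  have "((\<lambda>\<rho>. (1/a^4) * (ln (h+a*\<rho>) + 3*h/(h+a*\<rho>) - 3*h\<^sup>2/(2*(h+a*\<rho>)\<^sup>2) + h^3/(3*(h+a*\<rho>)^3))) has_real_derivative (1/a^4)*(1/Y - 3*h/Y\<^sup>2 + 3*h\<^sup>2/Y^3 - h^3/Y^4) * a) (at x)"
    using DERIV_chain2[OF dQ[unfolded Y_def] dL] unfolding Y_def .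
  moreover have "(1/a^4)*(1/Y - 3*h/Y\<^sup>2 + 3*h\<^sup>2/Y^3 - h^3/Y^4) * a = x^3/Y^4"
  proof -
    have hx: "h = Y - a*x" unfolding Y_def by simp
    have "(1/a^4)*(1/Y - 3*h/Y\<^sup>2 + 3*h\<^sup>2/Y^3 - h^3/Y^4) * a = (Y - h)^3/(a^3*Y^4)"
      using Y a by (simp add: field_simps) algebra
    also have "\<dots> = x^3/Y^4" unfolding hx using a Y by (simp add: power_mult_distrib)
    finally show ?thesis .
  qed
  ultimately show ?thesis unfolding P2_def Y_def by simp
qed

lemma P1_int:
  assumes a: "a > 0" and h: "h > 0" and M: "M \<ge> 0"
  shows "((\<lambda>\<rho>. \<rho>/(h+a*\<rho>)^3) has_integral (P1 a h M - P1 a h 0)) {0..M}"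
proof (rule fundamental_theorem_of_calculus[OF M, of "P1 a h" "\<lambda>\<rho>. \<rho>/(h+a*\<rho>)^3"])
  fix x assume "x \<in> {0..M}"
  hence "x \<ge> 0" by simp
  from P1_deriv[OF a h this] have "(P1 a h has_real_derivative x/(h+a*x)^3) (at x within {0..M})"
    by (rule has_field_derivative_at_within)
  thus "(P1 a h has_vector_derivative x/(h+a*x)^3) (at x within {0..M})"
    by (simp add: has_real_derivative_iff_has_vector_derivative)
qed

lemma P2_int:
  assumes a: "a > 0" and h: "h > 0" and M: "M \<ge> 0"
  shows "((\<lambda>\<rho>. \<rho>^3/(h+a*\<rho>)^4) has_integral (P2 a h M - P2 a h 0)) {0..M}"
proof (rule fundamental_theorem_of_calculus[OF M, of "P2 a h" "\<lambda>\<rho>. \<rho>^3/(h+a*\<rho>)^4"])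
  fix x assume "x \<in> {0..M}"
  hence "x \<ge> 0" by simp
  from P2_deriv[OF a h this] have "(P2 a h has_real_derivative x^3/(h+a*x)^4) (at x within {0..M})"
    by (rule has_field_derivative_at_within)
  thus "(P2 a h has_vector_derivative x^3/(h+a*x)^4) (at x within {0..M})"
    by (simp add: has_real_derivative_iff_has_vector_derivative)
qed


lemma lnX_bound:
  fixes c X :: real
  assumes "0 < c" "c \<le> X" "X \<le> c + 1"
  shows "\<bar>ln X\<bar> \<le> \<bar>ln c\<bar> + \<bar>ln (c+1)\<bar>"
proof -
  have "ln c \<le> ln X" by (rule ln_mono) (use assms in auto)
  moreover have "ln X \<le> ln (c+1)" by (rule ln_mono) (use assms in auto)
  ultimately show ?thesis by linarith
qed

lemma abs4: "\<bar>(A::real) + B - Cc + D\<bar> \<le> \<bar>A\<bar> + \<bar>B\<bar> + \<bar>Cc\<bar> + \<bar>D\<bar>"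
  by arith

lemma asym_core:
  fixes a b c1 c2 M :: real and q :: "real \<Rightarrow> real"
  assumes a: "a > 0" and M: "M > 0" and c1: "c1 \<ge> 0" and c2: "c2 \<ge> 0" and qc: "continuous_on {0..M} q"
    and q_lo: "\<And>\<rho>. \<rho> \<in> {0..M} \<Longrightarrow> a*\<rho> \<le> q \<rho>"
    and q_hi: "\<And>\<rho>. \<rho> \<in> {0..M} \<Longrightarrow> q \<rho> - a*\<rho> \<le> c1*\<rho>\<^sup>2"
    and q_b: "\<And>\<rho>. \<rho> \<in> {0..M} \<Longrightarrow> \<bar>q \<rho> - a*\<rho> - b*\<rho>\<^sup>2\<bar> \<le> c2*\<rho>^3"
  shows "\<exists>C. \<forall>h\<in>{0<..1}. \<bar>integral {0..M} (\<lambda>\<rho>. \<rho>/(h + q \<rho>)^3) - (1/(2*a\<^sup>2*h) + 3*b/a^4 * ln h)\<bar> \<le> C"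
proof -
  define K where "K = 6*c1\<^sup>2/a^5 + 3*c2/a^4"
  define C where "C = M*K + 3/(2*a^3*M) + 3*\<bar>b\<bar>/a^4 * (\<bar>ln (a*M)\<bar> + \<bar>ln (a*M+1)\<bar> + 5) + 3*\<bar>b\<bar>/a^4 * 2"
  show ?thesis
  proof (intro exI ballI)
    fix h :: real assume "h \<in> {0<..1}"
    hence h: "h > 0" "h \<le> 1" by auto
    define f where "f = (\<lambda>\<rho>. \<rho>/(h + q \<rho>)^3)"
    define g1 where "g1 = (\<lambda>\<rho>::real. \<rho>/(h+a*\<rho>)^3)"
    define g2 where "g2 = (\<lambda>\<rho>::real. \<rho>^3/(h+a*\<rho>)^4)"
    define rem where "rem = (\<lambda>\<rho>. f \<rho> - g1 \<rho> + 3*b*g2 \<rho>)"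
    have pos: "h + q \<rho> > 0" if "\<rho> \<in> {0..M}" for \<rho>
      using q_lo[OF that] that a h by (smt (verit) atLeastAtMost_iff mult_nonneg_nonneg)
    have fint: "f integrable_on {0..M}" unfolding f_def
      using pos by (intro integrable_continuous_interval continuous_intros qc) force
    have g1i: "(g1 has_integral (P1 a h M - P1 a h 0)) {0..M}"
      unfolding g1_def using P1_int[OF a h(1)] M by simp
    have g2i: "(g2 has_integral (P2 a h M - P2 a h 0)) {0..M}"
      unfolding g2_def using P2_int[OF a h(1)] M by simp
    have remi: "(rem has_integral (integral {0..M} f - (P1 a h M - P1 a h 0) + 3*b*(P2 a h M - P2 a h 0))) {0..M}"
      unfolding rem_def
      using has_integral_add[OF has_integral_diff[OF integrable_integral[OF fint] g1i] has_integral_mult_right[OF g2i, of "3*b"]]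
      by (simp add: mult.assoc)
    have rem_le: "norm (rem \<rho>) \<le> K" if r: "\<rho> \<in> {0..M}" for \<rho>
    proof -
      have x: "h + a*\<rho> > 0" using a h r by (simp add: add_pos_nonneg)
      have e: "h + q \<rho> = (h + a*\<rho>) + (q \<rho> - a*\<rho>)" by simp
      have "\<bar>\<rho>/((h + a*\<rho>) + (q \<rho> - a*\<rho>))^3 - \<rho>/(h+a*\<rho>)^3 + 3*b*\<rho>^3/(h+a*\<rho>)^4\<bar> \<le> K"
        unfolding K_def using q_lo[OF r] q_hi[OF r] q_b[OF r] r a h c1 c2
        by (intro rem_bound[OF x a]) (auto simp: algebra_simps)
      thus ?thesis unfolding rem_def f_def g1_def g2_def by (simp add: e[symmetric])
    qed
    have "norm (integral {0..M} rem) \<le> integral {0..M} (\<lambda>_. K)"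
      using remi rem_le by (intro integral_norm_bound_integral) auto
    hence IR: "\<bar>integral {0..M} rem\<bar> \<le> M*K" using M by simp
    have IRe: "integral {0..M} rem = integral {0..M} f - (P1 a h M - P1 a h 0) + 3*b*(P2 a h M - P2 a h 0)"
      using remi by (rule integral_unique)
    define X where "X = h + a*M"
    have aM: "a*M > 0" using a M by simp
    have X: "X > 0" "a*M \<le> X" "X \<le> a*M + 1" "h \<le> X" unfolding X_def using h aM by auto
    have P10: "P1 a h 0 = - 1/(2*a\<^sup>2*h)" unfolding P1_def using h a by (simp add: field_simps power2_eq_square)
    have P20: "P2 a h 0 = (1/a^4) * (ln h + 11/6)" unfolding P2_def using h a by (simp add: field_simps power2_eq_square power3_eq_cube)
    have P1M: "\<bar>P1 a h M\<bar> \<le> 3/(2*a^3*M)"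
    proof -
      have hX: "h/X \<le> 1" using X by simp
      have e: "h/(2*X\<^sup>2) = (h/X)*(1/(2*X))" by (simp add: power2_eq_square)
      have "(h/X)*(1/(2*X)) \<le> 1*(1/(2*X))" by (rule mult_right_mono[OF hX]) (use X in simp)
      hence t1: "h/(2*X\<^sup>2) \<le> 1/(2*X)" unfolding e by simp
      have t0: "0 \<le> h/(2*X\<^sup>2)" using h by simp
      have t2: "0 < 1/X" using X by simp
      have "\<bar>- 1/X + h/(2*X\<^sup>2)\<bar> \<le> 1/X + 1/(2*X)" using t0 t1 t2 by linarith
      also have "\<dots> = 3/(2*X)" by simp
      also have "\<dots> \<le> 3/(2*(a*M))" using X a M by (intro divide_left_mono) auto
      finally have "\<bar>- 1/X + h/(2*X\<^sup>2)\<bar> \<le> 3/(2*(a*M))" .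
      hence "(1/a\<^sup>2) * \<bar>- 1/X + h/(2*X\<^sup>2)\<bar> \<le> (1/a\<^sup>2) * (3/(2*(a*M)))" using a by (intro mult_left_mono) auto
      thus ?thesis unfolding P1_def X_def[symmetric] using a by (simp add: abs_mult power2_eq_square power3_eq_cube field_simps)
    qed
    have P2M: "\<bar>P2 a h M\<bar> \<le> (1/a^4) * (\<bar>ln (a*M)\<bar> + \<bar>ln (a*M+1)\<bar> + 5)"
    proof -
      have hX1: "h/X \<le> 1" "0 \<le> h/X" using X h by auto
      have "3*h/X = 3*(h/X)" by simp
      hence t1: "\<bar>3*h/X\<bar> \<le> 3" using hX1 by simp
      have t2: "\<bar>3*h\<^sup>2/(2*X\<^sup>2)\<bar> \<le> 3/2"
      proof -
        have "h\<^sup>2 \<le> X\<^sup>2" using X h by (intro power_mono) auto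
        thus ?thesis using X by (simp add: field_simps)
      qed
      have t3: "\<bar>h^3/(3*X^3)\<bar> \<le> 1/3"
      proof -
        have "h^3 \<le> X^3" using X h by (intro power_mono) auto
        thus ?thesis using X h by (simp add: field_simps)
      qed
      have lX: "\<bar>ln X\<bar> \<le> \<bar>ln (a*M)\<bar> + \<bar>ln (a*M+1)\<bar>" using X a M by (intro lnX_bound) auto
      have "\<bar>ln X + 3*h/X - 3*h\<^sup>2/(2*X\<^sup>2) + h^3/(3*X^3)\<bar> \<le> \<bar>ln (a*M)\<bar> + \<bar>ln (a*M+1)\<bar> + 5"
        using t1 t2 t3 lX by linarith
      hence "(1/a^4) * \<bar>ln X + 3*h/X - 3*h\<^sup>2/(2*X\<^sup>2) + h^3/(3*X^3)\<bar> \<le> (1/a^4) * (\<bar>ln (a*M)\<bar> + \<bar>ln (a*M+1)\<bar> + 5)"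
        using a by (intro mult_left_mono) auto
      thus ?thesis unfolding P2_def X_def[symmetric] using a by (simp add: abs_mult)
    qed
    have eq: "integral {0..M} f - (1/(2*a\<^sup>2*h) + 3*b/a^4 * ln h)
       = integral {0..M} rem + P1 a h M - 3*b*P2 a h M + 3*b/a^4 * (11/6)"
      unfolding IRe P10 P20 using a by (simp add: field_simps)
    have B3: "\<bar>3*b*P2 a h M\<bar> \<le> 3*\<bar>b\<bar>/a^4 * (\<bar>ln (a*M)\<bar> + \<bar>ln (a*M+1)\<bar> + 5)"
    proof -
      have "\<bar>3*b*P2 a h M\<bar> = 3*\<bar>b\<bar>*\<bar>P2 a h M\<bar>" by (simp add: abs_mult)
      also have "\<dots> \<le> 3*\<bar>b\<bar>*((1/a^4) * (\<bar>ln (a*M)\<bar> + \<bar>ln (a*M+1)\<bar> + 5))" using P2M by (intro mult_left_mono) auto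
      finally show ?thesis by simp
    qed
    have B4: "\<bar>3*b/a^4 * (11/6)\<bar> \<le> 3*\<bar>b\<bar>/a^4 * 2"
    proof -
      have nn: "0 \<le> \<bar>b\<bar>/a^4" using a by simp
      have e1: "\<bar>3*b/a^4 * (11/6)\<bar> = (11/2)*(\<bar>b\<bar>/a^4)" using a by (simp add: abs_mult)
      have e2: "3*\<bar>b\<bar>/a^4 * 2 = 6*(\<bar>b\<bar>/a^4)" by simp
      show ?thesis unfolding e1 e2 using nn by linarith
    qed
    show "\<bar>integral {0..M} (\<lambda>\<rho>. \<rho>/(h + q \<rho>)^3) - (1/(2*a\<^sup>2*h) + 3*b/a^4 * ln h)\<bar> \<le> C"
      unfolding C_def f_def[symmetric] eq using IR P1M B3 B4 abs4[of "integral {0..M} rem" "P1 a h M" "3*b*P2 a h M" "3*b/a^4*(11/6)"] by linarith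
  qed
qed


definition qf :: "real \<Rightarrow> real \<Rightarrow> real \<Rightarrow> real" where
  "qf R S \<rho> = (S - sqrt (S\<^sup>2 - \<rho>)) + (R - sqrt (R\<^sup>2 - \<rho>))"

lemma asym_final:
  fixes R S L R1 R3 f0 :: real
  assumes R: "R > 0" and S: "S > 0" and L: "0 < L" and LRS: "L < min R S"
    and R1: "R1 > 0" and R1e: "1 / R1 = 1 / S + 1 / R"
    and R3: "R3 > 0" and R3e: "1 / R3 ^ 3 = 1 / S ^ 3 + 1 / R ^ 3"
  shows "\<exists>C. \<forall>h\<in>{0<..1}. \<bar>36 * pi * f0\<^sup>2 * integral {0..L\<^sup>2} (\<lambda>\<rho>. \<rho>/(h + qf R S \<rho>)^3)
             - 72 * pi * \<bar>f0\<bar>\<^sup>2 * (R1\<^sup>2 / h - 3 * R1 ^ 4 / R3 ^ 3 * \<bar>ln h\<bar>)\<bar> \<le> C"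
proof -
  define a where "a = 1/(2*S) + 1/(2*R)"
  define b where "b = 1/(8*S^3) + 1/(8*R^3)"
  define c1 where "c1 = 1/(2*S^3) + 1/(2*R^3)"
  define c2 where "c2 = 1/(2*S^5) + 1/(2*R^5)"
  define M where "M = L\<^sup>2"
  have a: "a > 0" unfolding a_def using R S by (intro add_pos_pos) auto
  have M: "M > 0" unfolding M_def using L by simp
  have MS: "M \<le> S\<^sup>2" and MR: "M \<le> R\<^sup>2" unfolding M_def using L LRS by (auto intro!: power_mono)
  have c1: "c1 \<ge> 0" unfolding c1_def using R S by (intro add_nonneg_nonneg) auto
  have c2: "c2 \<ge> 0" unfolding c2_def using R S by (intro add_nonneg_nonneg) auto
  have tay: "a*\<rho> \<le> qf R S \<rho> \<and> qf R S \<rho> - a*\<rho> \<le> c1*\<rho>\<^sup>2 \<and> \<bar>qf R S \<rho> - a*\<rho> - b*\<rho>\<^sup>2\<bar> \<le> c2*\<rho>^3"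
    if r: "\<rho> \<in> {0..M}" for \<rho>
  proof -
    have r0: "0 \<le> \<rho>" and rS: "\<rho> \<le> S\<^sup>2" and rR: "\<rho> \<le> R\<^sup>2" using r MS MR by auto
    note s = sph_taylor[OF S r0 rS] and t = sph_taylor[OF R r0 rR]
    have e1: "a*\<rho> = \<rho>/(2*S) + \<rho>/(2*R)" unfolding a_def by (simp add: field_simps)
    have e2: "c1*\<rho>\<^sup>2 = \<rho>\<^sup>2/(2*S^3) + \<rho>\<^sup>2/(2*R^3)" unfolding c1_def by (simp add: field_simps)
    have e3: "b*\<rho>\<^sup>2 = \<rho>\<^sup>2/(8*S^3) + \<rho>\<^sup>2/(8*R^3)" unfolding b_def by (simp add: field_simps)
    have e4: "c2*\<rho>^3 = \<rho>^3/(2*S^5) + \<rho>^3/(2*R^5)" unfolding c2_def by (simp add: field_simps)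
    show ?thesis unfolding qf_def e1 e2 e3 e4 using s t by (simp add: abs_le_iff)
  qed
  have qc: "continuous_on {0..M} (qf R S)" unfolding qf_def by (intro continuous_intros)
  obtain C where C: "\<forall>h\<in>{0<..1}. \<bar>integral {0..M} (\<lambda>\<rho>. \<rho>/(h + qf R S \<rho>)^3) - (1/(2*a\<^sup>2*h) + 3*b/a^4 * ln h)\<bar> \<le> C"
    using asym_core[OF a M c1 c2 qc, of b] tay by blast
  have ae: "a = 1/(2*R1)" unfolding a_def using R1e by (simp add: field_simps)
  have be: "b = 1/(8*R3^3)" unfolding b_def using R3e by (simp add: field_simps)
  show ?thesis
  proof (intro exI ballI)
    fix h :: real assume h: "h \<in> {0<..1}"
    have lnh: "\<bar>ln h\<bar> = - ln h" using h by simp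
    have k1: "1/(2*a\<^sup>2*h) = 2*R1\<^sup>2/h" unfolding ae using R1 by (simp add: field_simps power2_eq_square)
    have k2: "3*b/a^4 = 6*R1^4/R3^3" unfolding ae be using R1 R3 by (simp add: field_simps)
    have "36 * pi * f0\<^sup>2 * integral {0..L\<^sup>2} (\<lambda>\<rho>. \<rho>/(h + qf R S \<rho>)^3)
             - 72 * pi * \<bar>f0\<bar>\<^sup>2 * (R1\<^sup>2 / h - 3 * R1 ^ 4 / R3 ^ 3 * \<bar>ln h\<bar>)
          = (36 * pi * f0\<^sup>2) * (integral {0..M} (\<lambda>\<rho>. \<rho>/(h + qf R S \<rho>)^3) - (1/(2*a\<^sup>2*h) + 3*b/a^4 * ln h))"
      unfolding k1 k2 lnh M_def by (simp add: algebra_simps)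
    hence "\<bar>36 * pi * f0\<^sup>2 * integral {0..L\<^sup>2} (\<lambda>\<rho>. \<rho>/(h + qf R S \<rho>)^3)
             - 72 * pi * \<bar>f0\<bar>\<^sup>2 * (R1\<^sup>2 / h - 3 * R1 ^ 4 / R3 ^ 3 * \<bar>ln h\<bar>)\<bar>
          = (36 * pi * f0\<^sup>2) * \<bar>integral {0..M} (\<lambda>\<rho>. \<rho>/(h + qf R S \<rho>)^3) - (1/(2*a\<^sup>2*h) + 3*b/a^4 * ln h)\<bar>"
      by (simp add: abs_mult)
    also have "\<dots> \<le> (36 * pi * f0\<^sup>2) * C" using C h by (intro mult_left_mono) auto
    finally show "\<bar>36 * pi * f0\<^sup>2 * integral {0..L\<^sup>2} (\<lambda>\<rho>. \<rho>/(h + qf R S \<rho>)^3)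
             - 72 * pi * \<bar>f0\<bar>\<^sup>2 * (R1\<^sup>2 / h - 3 * R1 ^ 4 / R3 ^ 3 * \<bar>ln h\<bar>)\<bar> \<le> 36 * pi * f0\<^sup>2 * C" .
  qed
qed


lemma norm_sq_pair: "(norm (p::real\<times>real))\<^sup>2 = (fst p)\<^sup>2 + (snd p)\<^sup>2"
  by (cases p) (simp add: norm_Pair)

lemma ball_int1: "r \<ge> 0 \<Longrightarrow> integral (ball (0::real\<times>real) r) (\<lambda>_. 1::real) = pi * r\<^sup>2"
proof -
  assume r: "r \<ge> 0"
  have "integral (ball (0::real\<times>real) r) (\<lambda>_. 1::real) = measure lebesgue (ball (0::real\<times>real) r)"
    by (rule lmeasure_integral[symmetric]) simp
  also have "\<dots> = measure lborel (ball (0::real\<times>real) r)" by simp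
  also have "\<dots> = pi * r\<^sup>2" using content_ball[OF r, of "0::real\<times>real"] by (simp add: unit_ball_vol_2 power2_eq_square)
  finally show ?thesis .
qed

lemma int_sub:
  fixes f :: "real\<times>real \<Rightarrow> real"
  assumes fc: "continuous_on (cball 0 R0) f" and S: "S \<in> lmeasurable" and SR: "S \<subseteq> cball 0 R0"
  shows "f integrable_on S"
proof -
  have "compact (f ` cball 0 R0)" using fc by (intro compact_continuous_image) auto
  hence "bounded (f ` cball 0 R0)" by (rule compact_imp_bounded)
  then obtain K where K0: "\<forall>y\<in>f ` cball 0 R0. norm y \<le> K" unfolding bounded_iff by blast
  have K: "\<And>x. x \<in> cball 0 R0 \<Longrightarrow> \<bar>f x\<bar> \<le> K" using K0 by auto
  show ?thesis
  proof (rule measurable_bounded_by_integrable_imp_integrable_real[where g="\<lambda>_. K"])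
    show "f \<in> borel_measurable (lebesgue_on S)"
      using continuous_on_subset[OF fc SR] S by (intro continuous_imp_measurable_on_sets_lebesgue) auto
    show "(\<lambda>_. K) integrable_on S" using S by (rule integrable_on_const)
    show "\<And>x. x \<in> S \<Longrightarrow> \<bar>f x\<bar> \<le> K" using K SR by auto
    show "S \<in> sets lebesgue" using S by auto
  qed
qed

lemma annulus:
  fixes F :: "real \<Rightarrow> real"
  defines "f \<equiv> \<lambda>p::real\<times>real. F ((fst p)\<^sup>2 + (snd p)\<^sup>2)"
  assumes Fc: "continuous_on {0..M} F" and st: "0 \<le> s" "s \<le> t" "t \<le> M"
    and close: "\<And>\<rho>. s \<le> \<rho> \<Longrightarrow> \<rho> < t \<Longrightarrow> \<bar>F \<rho> - c\<bar> \<le> e"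
  shows "\<bar>integral (ball 0 (sqrt t)) f - integral (ball 0 (sqrt s)) f - pi*c*(t - s)\<bar> \<le> pi*e*(t-s)"
proof -
  have fc: "continuous_on (cball 0 (sqrt M)) f"
  proof -
    have "continuous_on (cball 0 (sqrt M)) (\<lambda>p::real\<times>real. (fst p)\<^sup>2 + (snd p)\<^sup>2)" by (intro continuous_intros)
    moreover have "(\<lambda>p::real\<times>real. (fst p)\<^sup>2 + (snd p)\<^sup>2) ` cball 0 (sqrt M) \<subseteq> {0..M}"
    proof
      fix y assume "y \<in> (\<lambda>p::real\<times>real. (fst p)\<^sup>2 + (snd p)\<^sup>2) ` cball 0 (sqrt M)"
      then obtain p :: "real\<times>real" where p: "norm p \<le> sqrt M" and y: "y = (fst p)\<^sup>2 + (snd p)\<^sup>2" by auto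
      have "(norm p)\<^sup>2 \<le> (sqrt M)\<^sup>2" using p by (intro power_mono) auto
      hence "(norm p)\<^sup>2 \<le> M" using st by simp
      thus "y \<in> {0..M}" using y norm_sq_pair[of p] by simp
    qed
    ultimately show ?thesis unfolding f_def by (intro continuous_on_compose2[OF Fc])
  qed
  define D where "D = ball (0::real\<times>real) (sqrt t) - ball 0 (sqrt s)"
  have Dm: "D \<in> lmeasurable" unfolding D_def by (intro fmeasurable_Diff) auto
  have stM: "sqrt t \<le> sqrt M" "sqrt s \<le> sqrt M" using st by auto
  have sub1: "ball (0::real\<times>real) (sqrt t) \<subseteq> cball 0 (sqrt M)" using stM by (auto simp del: real_sqrt_le_iff)
  have sub2: "ball (0::real\<times>real) (sqrt s) \<subseteq> cball 0 (sqrt M)" using stM by (auto simp del: real_sqrt_le_iff)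
  have subD: "D \<subseteq> cball 0 (sqrt M)" using sub1 unfolding D_def by auto
  have sst: "sqrt s \<le> sqrt t" using st by simp
  have un: "ball (0::real\<times>real) (sqrt t) = ball 0 (sqrt s) \<union> D" unfolding D_def using sst by (auto simp del: real_sqrt_le_iff)
  have dis: "ball (0::real\<times>real) (sqrt s) \<inter> D = {}" unfolding D_def by auto
  have i1: "integral (ball 0 (sqrt t)) f = integral (ball 0 (sqrt s)) f + integral D f"
    unfolding un using dis int_sub[OF fc _ sub2] int_sub[OF fc Dm subD] by (intro integral_Un) auto
  have c1: "(\<lambda>_. 1::real) integrable_on ball (0::real\<times>real) (sqrt s)" by (intro integrable_on_const) auto
  have c2: "(\<lambda>_. 1::real) integrable_on D" using Dm by (intro integrable_on_const)
  have "integral (ball (0::real\<times>real) (sqrt t)) (\<lambda>_. 1::real) = integral (ball (0::real\<times>real) (sqrt s)) (\<lambda>_. 1::real) + integral D (\<lambda>_. 1)"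
    unfolding un using dis c1 c2 by (intro integral_Un) auto
  hence mD: "integral D (\<lambda>_. 1::real) = pi*(t - s)" using ball_int1[of "sqrt t"] ball_int1[of "sqrt s"] st
    by (simp add: algebra_simps)
  have pts: "s \<le> (fst p)\<^sup>2 + (snd p)\<^sup>2 \<and> (fst p)\<^sup>2 + (snd p)\<^sup>2 < t" if "p \<in> D" for p
  proof -
    have a: "sqrt s \<le> norm p" "norm p < sqrt t" using that unfolding D_def by auto
    have "(sqrt s)\<^sup>2 \<le> (norm p)\<^sup>2" using a st by (intro power_mono) auto
    moreover have "(norm p)\<^sup>2 < (sqrt t)\<^sup>2" using a by (intro power_strict_mono) auto
    ultimately show ?thesis using st norm_sq_pair[of p] by auto
  qed
  have fD: "f integrable_on D" using int_sub[OF fc Dm subD] .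
  have "norm (integral D (\<lambda>p. f p - c)) \<le> integral D (\<lambda>_. e)"
  proof (rule integral_norm_bound_integral)
    show "(\<lambda>p. f p - c) integrable_on D" using fD Dm by (intro integrable_diff integrable_on_const)
    show "(\<lambda>_. e) integrable_on D" using Dm by (rule integrable_on_const)
    show "norm (f x - c) \<le> e" if "x \<in> D" for x using pts[OF that] close unfolding f_def by auto
  qed
  moreover have "integral D (\<lambda>p. f p - c) = integral D f - c * (pi*(t-s))"
  proof -
    have "integral D (\<lambda>p. f p - c) = integral D f - integral D (\<lambda>_. c)"
      using fD Dm by (intro integral_diff integrable_on_const)
    moreover have "integral D (\<lambda>_. c) = c * integral D (\<lambda>_. 1::real)"
      using integral_mult_right[of D c "\<lambda>_. 1::real"] by simp
    ultimately show ?thesis using mD by simp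
  qed
  moreover have "integral D (\<lambda>_. e) = e * (pi*(t-s))"
    using integral_mult_right[of D e "\<lambda>_. 1::real"] mD by simp
  ultimately show ?thesis using i1 by (simp add: algebra_simps)
qed


lemma polar:
  fixes F :: "real \<Rightarrow> real"
  assumes Fc: "continuous_on {0..M} F" and M: "M \<ge> 0"
  shows "integral (ball (0::real\<times>real) (sqrt M)) (\<lambda>p. F ((fst p)\<^sup>2 + (snd p)\<^sup>2)) = pi * integral {0..M} F"
proof -
  define f where "f = (\<lambda>p::real\<times>real. F ((fst p)\<^sup>2 + (snd p)\<^sup>2))"
  define B where "B = (\<lambda>s. integral (ball (0::real\<times>real) (sqrt s)) f)"
  have der: "(B has_vector_derivative pi * F s) (at s within {0..M})" if s: "s \<in> {0..M}" for s
    unfolding has_vector_derivative_def has_derivative_within_alt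
  proof (intro conjI allI impI)
    show "bounded_linear (\<lambda>x. x *\<^sub>R (pi * F s))" by (rule bounded_linear_scaleR_left)
    fix e :: real assume e: "e > 0"
    have ep: "e/pi > 0" using e by simp
    obtain d where d: "d > 0" and dF: "\<And>x'. x' \<in> {0..M} \<Longrightarrow> dist x' s < d \<Longrightarrow> dist (F x') (F s) < e/pi"
      using Fc s ep unfolding continuous_on_iff by metis
    show "\<exists>d>0. \<forall>y\<in>{0..M}. norm (y - s) < d \<longrightarrow> norm (B y - B s - (y - s) *\<^sub>R (pi * F s)) \<le> e * norm (y - s)"
    proof (intro exI[of _ d] conjI ballI impI d)
      fix y assume y: "y \<in> {0..M}" and yd: "norm (y - s) < d"
      show "norm (B y - B s - (y - s) *\<^sub>R (pi * F s)) \<le> e * norm (y - s)"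
      proof (cases "s \<le> y")
        case True
        have close: "\<bar>F \<rho> - F s\<bar> \<le> e/pi" if "s \<le> \<rho>" "\<rho> < y" for \<rho>
          using dF[of \<rho>] that s y yd True by (auto simp: dist_real_def)
        have "\<bar>B y - B s - pi*F s*(y - s)\<bar> \<le> pi*(e/pi)*(y-s)"
          unfolding B_def f_def using s y True close by (intro annulus[OF Fc]) auto
        thus ?thesis using True by (simp add: algebra_simps)
      next
        case False
        have close: "\<bar>F \<rho> - F s\<bar> \<le> e/pi" if "y \<le> \<rho>" "\<rho> < s" for \<rho>
          using dF[of \<rho>] that s y yd False by (auto simp: dist_real_def)
        have "\<bar>B s - B y - pi*F s*(s - y)\<bar> \<le> pi*(e/pi)*(s-y)"
          unfolding B_def f_def using s y False close by (intro annulus[OF Fc]) auto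
        thus ?thesis using False by (simp add: algebra_simps abs_minus_commute)
      qed
    qed
  qed
  have hi: "((\<lambda>s. pi * F s) has_integral B M - B 0) {0..M}"
    using M der by (intro fundamental_theorem_of_calculus) auto
  have B0: "B 0 = 0" unfolding B_def by simp
  have "((\<lambda>s. pi * F s) has_integral B M) {0..M}" using hi unfolding B0 by simp
  hence i: "integral {0..M} (\<lambda>s. pi * F s) = B M" by (rule integral_unique)
  have "integral {0..M} (\<lambda>s. pi * F s) = pi * integral {0..M} F" by (rule integral_mult_right)
  with i show ?thesis unfolding B_def f_def by simp
qed


lemma line_deriv:
  fixes f :: "real\<times>real \<Rightarrow> real"
  assumes "(f has_derivative f') (at (p + t *\<^sub>R e))"
  shows "((\<lambda>s. f (p + s *\<^sub>R e)) has_real_derivative f' e) (at t)"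
proof -
  have lin: "linear f'" using has_derivative_bounded_linear[OF assms] bounded_linear.linear by blast
  have g: "((\<lambda>s. p + s *\<^sub>R e) has_derivative (\<lambda>s. s *\<^sub>R e)) (at t)"
    by (auto intro!: derivative_eq_intros)
  have "((\<lambda>s. f (p + s *\<^sub>R e)) has_derivative (\<lambda>s. f' (s *\<^sub>R e))) (at t)"
    using has_derivative_compose[OF g assms] by simp
  moreover have "(\<lambda>s. f' (s *\<^sub>R e)) = (\<lambda>s. f' e * s)"
    using linear_scale[OF lin] by (auto simp: mult.commute)
  ultimately show ?thesis unfolding has_field_derivative_def by simp
qed

lemma maxp_dir:
  fixes u \<phi> \<Gamma> :: "real\<times>real \<Rightarrow> real" and H P :: "real\<times>real \<Rightarrow> real\<times>real" and K :: "real\<times>real \<Rightarrow> real\<times>real"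
  assumes pin: "p \<in> ball 0 L"
    and max: "\<And>q. q \<in> ball 0 L \<Longrightarrow> u q + \<epsilon> * \<phi> q \<le> u p + \<epsilon> * \<phi> p"
    and du: "\<And>q. q \<in> ball 0 L \<Longrightarrow> (u has_derivative (\<lambda>v. H q \<bullet> v)) (at q)"
    and d\<phi>: "\<And>q. q \<in> ball 0 L \<Longrightarrow> (\<phi> has_derivative (\<lambda>v. P q \<bullet> v)) (at q)"
    and \<Gamma>pos: "\<And>q. q \<in> ball 0 L \<Longrightarrow> \<Gamma> q > 0"
    and \<Gamma>P: "\<And>q. q \<in> ball 0 L \<Longrightarrow> \<Gamma> q *\<^sub>R P q = 2 *\<^sub>R q"
    and dF: "((\<lambda>q. \<Gamma> q *\<^sub>R H q) has_derivative K) (at p)"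
    and ee: "e \<bullet> e = 1"
    and pos: "K e \<bullet> e + 2*\<epsilon> > 0"
  shows False
proof -
  obtain r where r: "r > 0" and rb: "ball p r \<subseteq> ball 0 L" using pin open_ball open_contains_ball by blast
  have ne: "norm e = 1" using ee by (simp add: norm_eq_sqrt_inner)
  have inb: "p + t *\<^sub>R e \<in> ball 0 L" if "\<bar>t\<bar> < r" for t
  proof -
    have "dist p (p + t *\<^sub>R e) < r" using that ne by (simp add: dist_norm)
    thus ?thesis using rb by auto
  qed
  define g where "g = (\<lambda>t. u (p + t *\<^sub>R e) + \<epsilon> * \<phi> (p + t *\<^sub>R e))"
  define g' where "g' = (\<lambda>t. H (p + t *\<^sub>R e) \<bullet> e + \<epsilon> * (P (p + t *\<^sub>R e) \<bullet> e))"
  have dg: "(g has_real_derivative g' t) (at t)" if "\<bar>t\<bar> < r" for t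
  proof -
    have "((\<lambda>s. u (p + s *\<^sub>R e)) has_real_derivative H (p + t *\<^sub>R e) \<bullet> e) (at t)"
      using line_deriv[OF du[OF inb[OF that]]] by simp
    moreover have "((\<lambda>s. \<phi> (p + s *\<^sub>R e)) has_real_derivative P (p + t *\<^sub>R e) \<bullet> e) (at t)"
      using line_deriv[OF d\<phi>[OF inb[OF that]]] by simp
    ultimately show ?thesis unfolding g_def g'_def by (auto intro!: derivative_eq_intros)
  qed
  have g0: "g' 0 = 0"
  proof (rule DERIV_local_max[OF dg[of 0] r])
    show "\<forall>y. \<bar>0 - y\<bar> < r \<longrightarrow> g y \<le> g 0" unfolding g_def using max inb by auto
  qed (use r in auto)
  define k where "k = (\<lambda>t. (\<Gamma> (p + t *\<^sub>R e) *\<^sub>R H (p + t *\<^sub>R e)) \<bullet> e + 2*\<epsilon>*((p + t *\<^sub>R e) \<bullet> e))"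
  have kg: "k t = \<Gamma> (p + t *\<^sub>R e) * g' t" if "\<bar>t\<bar> < r" for t
  proof -
    have "\<Gamma> (p + t *\<^sub>R e) * (P (p + t *\<^sub>R e) \<bullet> e) = (\<Gamma> (p + t *\<^sub>R e) *\<^sub>R P (p + t *\<^sub>R e)) \<bullet> e" by simp
    also have "\<dots> = 2 * ((p + t *\<^sub>R e) \<bullet> e)" using \<Gamma>P[OF inb[OF that]] by simp
    finally show ?thesis unfolding k_def g'_def by (simp add: algebra_simps)
  qed
  have k0: "k 0 = 0" using kg[of 0] g0 r by simp
  have dk: "(k has_real_derivative K e \<bullet> e + 2*\<epsilon>) (at 0)"
  proof -
    have "((\<lambda>q. (\<Gamma> q *\<^sub>R H q) \<bullet> e) has_derivative (\<lambda>v. K v \<bullet> e)) (at (p + 0 *\<^sub>R e))"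
      using has_derivative_inner_left[OF dF, of e] by simp
    from line_deriv[OF this] have a: "((\<lambda>t. (\<Gamma> (p + t *\<^sub>R e) *\<^sub>R H (p + t *\<^sub>R e)) \<bullet> e) has_real_derivative K e \<bullet> e) (at 0)" .
    have b: "((\<lambda>t. 2*\<epsilon>*((p + t *\<^sub>R e) \<bullet> e)) has_real_derivative 2*\<epsilon>) (at 0)"
      using ee by (auto intro!: derivative_eq_intros simp: inner_add_left)
    show ?thesis unfolding k_def using DERIV_add[OF a b] by simp
  qed
  obtain d where d: "d > 0" and kpos: "\<And>t. t > 0 \<Longrightarrow> t < d \<Longrightarrow> k 0 < k (0 + t)"
    using DERIV_pos_inc_right[OF dk pos] by blast
  define \<tau> where "\<tau> = min d r / 2"
  have \<tau>: "\<tau> > 0" "\<tau> < d" "\<tau> < r" unfolding \<tau>_def using d r by auto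
  obtain z where z: "0 < z" "z < \<tau>" and mvt: "g \<tau> - g 0 = (\<tau> - 0) * g' z"
    using MVT2[of 0 \<tau> g g'] dg \<tau> by force
  have "k z > 0" using kpos[of z] z \<tau> k0 by simp
  moreover have "k z = \<Gamma> (p + z *\<^sub>R e) * g' z" using kg[of z] z \<tau> by simp
  moreover have "\<Gamma> (p + z *\<^sub>R e) > 0" using \<Gamma>pos inb[of z] z \<tau> by simp
  ultimately have "g' z > 0" by (simp add: zero_less_mult_iff)
  hence "\<tau> * g' z > 0" using \<tau> by simp
  hence "g \<tau> > g 0" using mvt by simp
  moreover have "g \<tau> \<le> g 0" unfolding g_def using max inb[of \<tau>] \<tau> by simp
  ultimately show False by simp
qed


lemma inner_e1: "(x::real\<times>real) \<bullet> (1,0) = fst x" by (cases x) simp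
lemma inner_e2: "(x::real\<times>real) \<bullet> (0,1) = snd x" by (cases x) simp

lemma maxp:
  fixes u \<phi> \<Gamma> :: "real\<times>real \<Rightarrow> real" and H P :: "real\<times>real \<Rightarrow> real\<times>real" and K :: "real\<times>real \<Rightarrow> real\<times>real \<Rightarrow> real\<times>real"
  assumes L: "L > 0"
    and uc: "continuous_on (cball 0 L) u" and ub: "\<And>p. p \<in> sphere 0 L \<Longrightarrow> u p = 0"
    and du: "\<And>q. q \<in> ball 0 L \<Longrightarrow> (u has_derivative (\<lambda>v. H q \<bullet> v)) (at q)"
    and dF: "\<And>q. q \<in> ball 0 L \<Longrightarrow> ((\<lambda>q. \<Gamma> q *\<^sub>R H q) has_derivative K q) (at q)"
    and div: "\<And>q. q \<in> ball 0 L \<Longrightarrow> fst (K q (1,0)) + snd (K q (0,1)) = 0"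
    and \<phi>c: "continuous_on (cball 0 L) \<phi>" and \<phi>0: "\<And>p. p \<in> cball 0 L \<Longrightarrow> 0 \<le> \<phi> p"
    and \<phi>B: "\<And>p. p \<in> cball 0 L \<Longrightarrow> \<phi> p \<le> B"
    and d\<phi>: "\<And>q. q \<in> ball 0 L \<Longrightarrow> (\<phi> has_derivative (\<lambda>v. P q \<bullet> v)) (at q)"
    and \<Gamma>pos: "\<And>q. q \<in> ball 0 L \<Longrightarrow> \<Gamma> q > 0"
    and \<Gamma>P: "\<And>q. q \<in> ball 0 L \<Longrightarrow> \<Gamma> q *\<^sub>R P q = 2 *\<^sub>R q"
  shows "\<forall>p\<in>ball 0 L. u p \<le> 0"
proof (rule ccontr)
  assume "\<not> (\<forall>p\<in>ball 0 L. u p \<le> 0)"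
  then obtain p0 where p0: "p0 \<in> ball 0 L" and up0: "u p0 > 0" by force
  have p0c: "p0 \<in> cball 0 L" using p0 by auto
  have B: "B \<ge> 0" using \<phi>0[OF p0c] \<phi>B[OF p0c] by simp
  define \<epsilon> where "\<epsilon> = u p0 / (2*(B+1))"
  have \<epsilon>: "\<epsilon> > 0" unfolding \<epsilon>_def using up0 B by simp
  have \<epsilon>B: "\<epsilon> * B < u p0"
  proof -
    have "\<epsilon> * B = u p0 * (B / (2*(B+1)))" unfolding \<epsilon>_def by simp
    also have "\<dots> < u p0 * 1" using up0 B by (intro mult_strict_left_mono) (auto simp: field_simps)
    finally show ?thesis by simp
  qed
  define v where "v = (\<lambda>p. u p + \<epsilon> * \<phi> p)"
  have vc: "continuous_on (cball 0 L) v" unfolding v_def using uc \<phi>c by (intro continuous_intros)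
  obtain p where pc: "p \<in> cball 0 L" and pmax: "\<And>q. q \<in> cball 0 L \<Longrightarrow> v q \<le> v p"
    using continuous_attains_sup[OF compact_cball _ vc] L by force
  have pb: "p \<in> ball 0 L"
  proof (rule ccontr)
    assume "p \<notin> ball 0 L"
    hence ps: "p \<in> sphere 0 L" using pc by auto
    have "v p = \<epsilon> * \<phi> p" unfolding v_def using ub[OF ps] by simp
    also have "\<dots> \<le> \<epsilon> * B" using \<phi>B[OF pc] \<epsilon> by (intro mult_left_mono) auto
    also have "\<dots> < u p0" by (rule \<epsilon>B)
    also have "\<dots> \<le> v p0" unfolding v_def using \<phi>0[OF p0c] \<epsilon> by simp
    also have "\<dots> \<le> v p" by (rule pmax[OF p0c])
    finally show False by simp
  qed
  have max: "\<And>q. q \<in> ball 0 L \<Longrightarrow> u q + \<epsilon> * \<phi> q \<le> u p + \<epsilon> * \<phi> p"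
    using pmax unfolding v_def by auto
  have "fst (K p (1,0)) + 2*\<epsilon> > 0 \<or> snd (K p (0,1)) + 2*\<epsilon> > 0" using div[OF pb] \<epsilon> by linarith
  thus False
  proof
    assume pos: "fst (K p (1,0)) + 2*\<epsilon> > 0"
    show False
      by (rule maxp_dir[OF pb max du d\<phi> \<Gamma>pos \<Gamma>P dF[OF pb], of "(1,0)"]) (use pos in \<open>auto simp: inner_e1\<close>)
  next
    assume pos: "snd (K p (0,1)) + 2*\<epsilon> > 0"
    show False
      by (rule maxp_dir[OF pb max du d\<phi> \<Gamma>pos \<Gamma>P dF[OF pb], of "(0,1)"]) (use pos in \<open>auto simp: inner_e2\<close>)
  qed
qed


lemma inner_pair_expand: "(q::real\<times>real) \<bullet> y = fst q * fst y + snd q * snd y"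
  by (cases q, cases y) simp

lemma energy:
  fixes R S L h f0 :: real and w :: "real\<times>real \<Rightarrow> real" and G :: "real\<times>real \<Rightarrow> real\<times>real"
  assumes R: "R > 0" and S: "S > 0" and L: "0 < L" and LRS: "L < min R S" and h: "h > 0"
    and sol: "solves_reynolds R S h L f0 w G"
  shows "integral (ball 0 L) (\<lambda>p. (gap R S h p)^3 * (norm (G p))\<^sup>2)
           = 36 * pi * f0\<^sup>2 * integral {0..L\<^sup>2} (\<lambda>\<rho>. \<rho>/(h + qf R S \<rho>)^3)"
proof -
  define M where "M = L\<^sup>2"
  have M0: "M \<ge> 0" unfolding M_def by simp
  have MS: "M \<le> S\<^sup>2" and MR: "M \<le> R\<^sup>2" unfolding M_def using L LRS by (auto intro!: power_mono)
  define nn where "nn = (\<lambda>p::real\<times>real. (fst p)\<^sup>2 + (snd p)\<^sup>2)"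
  define \<gamma> where "\<gamma> = (\<lambda>\<rho>. h + qf R S \<rho>)"
  have gap_eq: "gap R S h p = \<gamma> (nn p)" for p
    unfolding gap_def gamma_t_def gamma_b_def \<gamma>_def qf_def nn_def by (simp add: diff_diff_eq)
  have qf0: "0 \<le> qf R S \<rho>" if "\<rho> \<in> {0..M}" for \<rho>
  proof -
    have "\<rho>/(2*S) \<le> S - sqrt (S\<^sup>2 - \<rho>)" using sph_taylor(1)[OF S, of \<rho>] that MS by auto
    moreover have "\<rho>/(2*R) \<le> R - sqrt (R\<^sup>2 - \<rho>)" using sph_taylor(1)[OF R, of \<rho>] that MR by auto
    moreover have "0 \<le> \<rho>/(2*S)" "0 \<le> \<rho>/(2*R)" using that S R by auto
    ultimately show ?thesis unfolding qf_def by linarith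
  qed
  have \<gamma>pos: "\<gamma> \<rho> > 0" if "\<rho> \<in> {0..M}" for \<rho> unfolding \<gamma>_def using qf0[OF that] h by simp
  have nn_norm: "nn p = (norm p)\<^sup>2" for p unfolding nn_def using norm_sq_pair[of p] by simp
  have nn_cb: "nn p \<in> {0..M}" if "p \<in> cball 0 L" for p
  proof -
    have "(norm p)\<^sup>2 \<le> L\<^sup>2" using that by (intro power_mono) auto
    thus ?thesis unfolding nn_norm M_def by simp
  qed
  have nn_b: "nn p \<in> {0..M}" if "p \<in> ball 0 L" for p using nn_cb that by auto
  have nn_s: "nn p = M" if "p \<in> sphere 0 L" for p unfolding nn_norm M_def using that by simp
  have nnc: "continuous_on X nn" for X unfolding nn_def by (intro continuous_intros)
  define \<psi> where "\<psi> = (\<lambda>\<rho>. 1/(\<gamma> \<rho>)^3)"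
  have \<gamma>ne: "h + ((S - sqrt (S\<^sup>2 - \<rho>)) + (R - sqrt (R\<^sup>2 - \<rho>))) \<noteq> 0" if "\<rho> \<in> {0..M}" for \<rho>
    using \<gamma>pos[OF that] unfolding \<gamma>_def qf_def by simp
  have \<psi>c: "continuous_on {0..M} \<psi>" unfolding \<psi>_def \<gamma>_def qf_def
    by (intro continuous_intros) (use \<gamma>ne in auto)
  have \<psi>0: "\<psi> \<rho> \<ge> 0" if "\<rho> \<in> {0..M}" for \<rho> unfolding \<psi>_def using \<gamma>pos[OF that] by simp
  define \<Psi> where "\<Psi> = (\<lambda>\<rho>. integral {0..\<rho>} \<psi>)"
  have d\<Psi>: "(\<Psi> has_real_derivative \<psi> \<rho>) (at \<rho> within {0..M})" if "\<rho> \<in> {0..M}" for \<rho>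
    unfolding \<Psi>_def using integral_has_real_derivative[OF \<psi>c that] .
  have \<Psi>c: "continuous_on {0..M} \<Psi>"
    using d\<Psi> DERIV_continuous continuous_on_eq_continuous_within by blast
  have \<Psi>0: "\<Psi> \<rho> \<ge> 0" if "\<rho> \<in> {0..M}" for \<rho>
  proof -
    have "\<psi> integrable_on {0..\<rho>}" using that
      by (intro integrable_continuous_interval continuous_on_subset[OF \<psi>c]) auto
    thus ?thesis unfolding \<Psi>_def using \<psi>0 that by (intro integral_nonneg) auto
  qed
  define \<phi> where "\<phi> = (\<lambda>p. \<Psi> (nn p))"
  define P where "P = (\<lambda>p. (2 * \<psi> (nn p)) *\<^sub>R p)"
  have d\<phi>: "(\<phi> has_derivative (\<lambda>v. P q \<bullet> v)) (at q)" if q: "q \<in> ball 0 L" for q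
  proof -
    have dnn: "(nn has_derivative (\<lambda>v. 2*(fst q * fst v + snd q * snd v))) (at q within ball 0 L)"
      unfolding nn_def by (auto intro!: derivative_eq_intros simp: algebra_simps)
    have "((\<lambda>x. \<Psi> (nn x)) has_derivative (\<lambda>y. \<psi> (nn q) * (2*(fst q * fst y + snd q * snd y)))) (at q within ball 0 L)"
    proof (rule has_derivative_in_compose2[of "{0..M}" \<Psi> "\<lambda>x y. \<psi> x * y" nn "ball 0 L" q])
      show "\<And>x. x \<in> {0..M} \<Longrightarrow> (\<Psi> has_derivative (\<lambda>y. \<psi> x * y)) (at x within {0..M})"
        using d\<Psi> unfolding has_field_derivative_def by simp
      show "nn ` ball 0 L \<subseteq> {0..M}" using nn_b by auto
    qed (use q dnn in auto)
    moreover have "at q within ball 0 L = at q" by (rule at_within_open[OF q open_ball])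
    ultimately have "(\<phi> has_derivative (\<lambda>y. \<psi> (nn q) * (2*(fst q * fst y + snd q * snd y)))) (at q)"
      unfolding \<phi>_def by simp
    moreover have "(\<lambda>y. \<psi> (nn q) * (2*(fst q * fst y + snd q * snd y))) = (\<lambda>v. P q \<bullet> v)"
    proof
      fix y show "\<psi> (nn q) * (2*(fst q * fst y + snd q * snd y)) = P q \<bullet> y"
        unfolding P_def inner_scaleR_left inner_pair_expand by (simp add: algebra_simps)
    qed
    ultimately show ?thesis by simp
  qed
  have \<phi>c: "continuous_on (cball 0 L) \<phi>" unfolding \<phi>_def
    by (rule continuous_on_compose2[OF \<Psi>c nnc]) (use nn_cb in auto)
  have \<phi>0: "0 \<le> \<phi> p" if "p \<in> cball 0 L" for p unfolding \<phi>_def using \<Psi>0 nn_cb that by auto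
  obtain B where \<phi>B: "\<And>p. p \<in> cball 0 L \<Longrightarrow> \<phi> p \<le> B"
    using continuous_attains_sup[OF compact_cball _ \<phi>c] L by force
  define w0 where "w0 = (\<lambda>p. 3*f0*(\<Psi> M - \<phi> p))"
  define G0 where "G0 = (\<lambda>p. (-3*f0) *\<^sub>R P p)"
  have dw0: "(w0 has_derivative (\<lambda>v. G0 q \<bullet> v)) (at q)" if q: "q \<in> ball 0 L" for q
  proof -
    have "(w0 has_derivative (\<lambda>v. 3*f0*(0 - P q \<bullet> v))) (at q)"
      unfolding w0_def by (intro has_derivative_mult_right has_derivative_diff has_derivative_const d\<phi>[OF q])
    moreover have "(\<lambda>v. 3*f0*(0 - P q \<bullet> v)) = (\<lambda>v. G0 q \<bullet> v)" unfolding G0_def by auto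
    ultimately show ?thesis by simp
  qed
  have w0c: "continuous_on (cball 0 L) w0" unfolding w0_def using \<phi>c by (intro continuous_intros)
  have w0s: "w0 p = 0" if "p \<in> sphere 0 L" for p unfolding w0_def \<phi>_def using nn_s[OF that] by simp
  from sol obtain F' where wc: "continuous_on (cball 0 L) w" and ws: "\<And>p. p \<in> sphere 0 L \<Longrightarrow> w p = 0"
    and dw: "\<And>p. p \<in> ball 0 L \<Longrightarrow> (w has_derivative (\<lambda>v. G p \<bullet> v)) (at p)"
    and dF: "\<And>p. p \<in> ball 0 L \<Longrightarrow> ((\<lambda>q. (gap R S h q)^3 *\<^sub>R G q) has_derivative F' p) (at p)"
    and divF: "\<And>p. p \<in> ball 0 L \<Longrightarrow> - (1/12) * (fst (F' p (1,0)) + snd (F' p (0,1))) = f0"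
    unfolding solves_reynolds_def by blast
  define \<Gamma> where "\<Gamma> = (\<lambda>p. (gap R S h p)^3)"
  have \<Gamma>pos: "\<Gamma> q > 0" if "q \<in> ball 0 L" for q unfolding \<Gamma>_def gap_eq using \<gamma>pos[OF nn_b[OF that]] by simp
  have \<Gamma>P: "\<Gamma> q *\<^sub>R P q = 2 *\<^sub>R q" if "q \<in> ball 0 L" for q
    unfolding \<Gamma>_def gap_eq P_def \<psi>_def using \<gamma>pos[OF nn_b[OF that]] by simp
  have \<Gamma>G0: "\<Gamma> q *\<^sub>R G0 q = (-6*f0) *\<^sub>R q" if "q \<in> ball 0 L" for q
  proof -
    have "\<Gamma> q *\<^sub>R G0 q = (-3*f0) *\<^sub>R (\<Gamma> q *\<^sub>R P q)" unfolding G0_def by (simp add: mult.commute)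
    also have "\<dots> = (-6*f0) *\<^sub>R q" unfolding \<Gamma>P[OF that] by simp
    finally show ?thesis .
  qed
  define u where "u = (\<lambda>p. w p - w0 p)"
  define H where "H = (\<lambda>p. G p - G0 p)"
  define K where "K = (\<lambda>q v. F' q v + (6*f0) *\<^sub>R v)"
  have du: "(u has_derivative (\<lambda>v. H q \<bullet> v)) (at q)" if q: "q \<in> ball 0 L" for q
    using has_derivative_diff[OF dw[OF q] dw0[OF q]] unfolding u_def H_def by (simp add: inner_diff_left)
  have dflux: "((\<lambda>q. \<Gamma> q *\<^sub>R H q) has_derivative K q) (at q)" if q: "q \<in> ball 0 L" for q
  proof -
    have "((\<lambda>q. \<Gamma> q *\<^sub>R G q + (6*f0) *\<^sub>R q) has_derivative K q) (at q)"
      unfolding K_def \<Gamma>_def by (intro has_derivative_add dF[OF q] has_derivative_scaleR_right has_derivative_ident)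
    thus ?thesis
    proof (rule has_derivative_transform_within_open[OF _ open_ball q])
      fix x :: "real\<times>real" assume "x \<in> ball 0 L"
      thus "\<Gamma> x *\<^sub>R G x + (6*f0) *\<^sub>R x = \<Gamma> x *\<^sub>R H x"
        unfolding H_def using \<Gamma>G0 by (simp add: scaleR_diff_right)
    qed
  qed
  have divK: "fst (K q (1,0)) + snd (K q (0,1)) = 0" if q: "q \<in> ball 0 L" for q
    using divF[OF q] unfolding K_def by (simp add: field_simps)
  have uc: "continuous_on (cball 0 L) u" unfolding u_def using wc w0c by (intro continuous_intros)
  have us: "u p = 0" if "p \<in> sphere 0 L" for p unfolding u_def using ws[OF that] w0s[OF that] by simp
  have le1: "\<forall>p\<in>ball 0 L. u p \<le> 0"
    by (rule maxp[OF L uc us du dflux divK \<phi>c \<phi>0 \<phi>B d\<phi> \<Gamma>pos \<Gamma>P])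
  have le2: "\<forall>p\<in>ball 0 L. - u p \<le> 0"
  proof (rule maxp[OF L _ _ _ _ _ \<phi>c \<phi>0 \<phi>B d\<phi> \<Gamma>pos \<Gamma>P, where H="\<lambda>p. - H p" and K="\<lambda>q v. - K q v"])
    show "continuous_on (cball 0 L) (\<lambda>p. - u p)" using uc by (intro continuous_intros)
    show "\<And>p. p \<in> sphere 0 L \<Longrightarrow> - u p = 0" using us by simp
    show "((\<lambda>p. - u p) has_derivative (\<lambda>v. - H q \<bullet> v)) (at q)" if "q \<in> ball 0 L" for q
      using has_derivative_minus[OF du[OF that]] by simp
    show "((\<lambda>q. \<Gamma> q *\<^sub>R - H q) has_derivative (\<lambda>v. - K q v)) (at q)" if "q \<in> ball 0 L" for q
      using has_derivative_minus[OF dflux[OF that]] by simp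
    show "fst (- K q (1,0)) + snd (- K q (0,1)) = 0" if "q \<in> ball 0 L" for q
      using divK[OF that] by simp
  qed
  have GG0: "G q = G0 q" if q: "q \<in> ball 0 L" for q
  proof -
    have "w x = w0 x" if "x \<in> ball 0 L" for x using le1 le2 that unfolding u_def by force
    hence "(w0 has_derivative (\<lambda>v. G q \<bullet> v)) (at q)"
      using has_derivative_transform_within_open[OF dw[OF q] open_ball q] by blast
    hence eq: "(\<lambda>v. G q \<bullet> v) = (\<lambda>v. G0 q \<bullet> v)" using dw0[OF q] by (rule has_derivative_unique)
    have "G q \<bullet> (1,0) = G0 q \<bullet> (1,0)" "G q \<bullet> (0,1) = G0 q \<bullet> (0,1)" using eq by metis+
    thus ?thesis by (simp add: inner_e1 inner_e2 prod_eq_iff)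
  qed
  define Fi where "Fi = (\<lambda>\<rho>. 36 * f0\<^sup>2 * (\<rho>/(h + qf R S \<rho>)^3))"
  have integrand: "(gap R S h p)^3 * (norm (G p))\<^sup>2 = Fi (nn p)" if p: "p \<in> ball 0 L" for p
  proof -
    define g where "g = \<gamma> (nn p)"
    have g: "g > 0" unfolding g_def using \<gamma>pos[OF nn_b[OF p]] .
    have "G p = (-6*f0/g^3) *\<^sub>R p" unfolding GG0[OF p] G0_def P_def \<psi>_def g_def by simp
    hence "norm (G p) = \<bar>6*f0/g^3\<bar> * norm p" by simp
    hence "(norm (G p))\<^sup>2 = (6*f0/g^3)\<^sup>2 * nn p" unfolding nn_norm by (simp only: power_mult_distrib power2_abs)
    hence "(gap R S h p)^3 * (norm (G p))\<^sup>2 = g^3 * ((6*f0/g^3)\<^sup>2 * nn p)" unfolding gap_eq g_def by simp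
    also have "\<dots> = 36 * f0\<^sup>2 * (nn p / g^3)" using g by (simp add: field_simps power2_eq_square)
    finally show ?thesis unfolding Fi_def g_def \<gamma>_def by simp
  qed
  have Fic: "continuous_on {0..M} Fi" unfolding Fi_def qf_def
    by (intro continuous_intros) (use \<gamma>ne in auto)
  have "integral (ball 0 L) (\<lambda>p. (gap R S h p)^3 * (norm (G p))\<^sup>2) = integral (ball 0 L) (\<lambda>p. Fi (nn p))"
    using integrand by (rule Henstock_Kurzweil_Integration.integral_cong)
  also have "\<dots> = pi * integral {0..M} Fi"
    using polar[OF Fic M0] unfolding nn_def M_def using L by simp
  also have "integral {0..M} Fi = 36 * f0\<^sup>2 * integral {0..M} (\<lambda>\<rho>. \<rho>/(h + qf R S \<rho>)^3)"
    unfolding Fi_def by (rule integral_mult_right)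
  finally show ?thesis unfolding M_def by simp
qed


theorem proposition7:
  fixes R S L R1 R3 f0 :: real
  assumes "R > 0" and "S > 0" and "0 < L" and "L < min R S"
    and "R1 > 0" and "1 / R1 = 1 / S + 1 / R"
    and "R3 > 0" and "1 / R3 ^ 3 = 1 / S ^ 3 + 1 / R ^ 3"
  shows "\<exists>C. \<forall>h\<in>{0<..1}. \<forall>w G. solves_reynolds R S h L f0 w G \<longrightarrow>
           \<bar>integral (ball 0 L) (\<lambda>p. (gap R S h p)^3 * (norm (G p))\<^sup>2)
             - 72 * pi * \<bar>f0\<bar>\<^sup>2 * (R1\<^sup>2 / h - 3 * R1 ^ 4 / R3 ^ 3 * \<bar>ln h\<bar>)\<bar> \<le> C"
proof -
  obtain C where C: "\<forall>h\<in>{0<..1}. \<bar>36 * pi * f0\<^sup>2 * integral {0..L\<^sup>2} (\<lambda>\<rho>. \<rho>/(h + qf R S \<rho>)^3)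
             - 72 * pi * \<bar>f0\<bar>\<^sup>2 * (R1\<^sup>2 / h - 3 * R1 ^ 4 / R3 ^ 3 * \<bar>ln h\<bar>)\<bar> \<le> C"
    using asym_final[OF assms] by blast
  show ?thesis
  proof (intro exI[of _ C] ballI allI impI)
    fix h :: real and w :: "real\<times>real \<Rightarrow> real" and G :: "real\<times>real \<Rightarrow> real\<times>real"
    assume h: "h \<in> {0<..1}" and sol: "solves_reynolds R S h L f0 w G"
    have hp: "h > 0" using h by simp
    have e: "integral (ball 0 L) (\<lambda>p. (gap R S h p)^3 * (norm (G p))\<^sup>2)
           = 36 * pi * f0\<^sup>2 * integral {0..L\<^sup>2} (\<lambda>\<rho>. \<rho>/(h + qf R S \<rho>)^3)"
      using energy[OF assms(1-4) hp sol] .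
    show "\<bar>integral (ball 0 L) (\<lambda>p. (gap R S h p)^3 * (norm (G p))\<^sup>2)
             - 72 * pi * \<bar>f0\<bar>\<^sup>2 * (R1\<^sup>2 / h - 3 * R1 ^ 4 / R3 ^ 3 * \<bar>ln h\<bar>)\<bar> \<le> C"
      unfolding e using C h by blast
  qed
qed

end
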